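(* Assume the setting in the context. For all $\boldsymbol\gamma\in(0,\infty)^n$ and $\gamma\in(0,2\beta)$, the composition $T_{1,\boldsymbol\gamma}T_{2,\gamma}$ is $\alpha$-averaged with $\alpha=\max\big(\tfrac23,\tfrac{2}{1+2\beta/\gamma}\big)$.
   Context: $\mathcal H$ is a real Hilbert space, $n\ge1$, $(\omega_i)_{i=1}^n\in(0,1)^n$ with $\sum_i\omega_i=1$; $A_1,\dots,A_n:\mathcal H\to2^{\mathcal H}$ are maximal monotone; $B:\mathcal H\to\mathcal H$ is single-valued and $\beta\in(0,\infty)$ is such that $\beta B$ is firmly nonexpansive. Resolvent $J_A=(\mathrm{Id}+A)^{-1}$, reflection $R_A=2J_A-\mathrm{Id}$. An operator $T$ is $\alpha$-averaged ($\alpha\in(0,1)$) if $T=(1-\alpha)\mathrm{Id}+\alpha R$ with $R$ nonexpansive; firmly nonexpansive means $\tfrac12$-averaged. Product space: $\boldsymbol{\mathcal H}=\mathcal H^n$ with inner product $\langle\!\langle\mathbf x,\mathbf y\rangle\!\rangle=\sum_i\omega_i\langle x_i,y_i\rangle$; $\mathbf S=\{\mathbf x: x_1=\dots=x_n\}$; $N_{\mathbf S}(\mathbf x)=\mathbf S^\perp$ if $\mathbf x\in\mathbf S$ and $\emptyset$ otherwise. For $\boldsymbol\gamma=(\gamma_i)\in(0,\infty)^n$, $\boldsymbol\gamma\mathbf A:\mathbf x\mapsto\prod_i\gamma_iA_i(x_i)$; $\mathbf B\mathbf x=(Bx_i)_i$. $T_{1,\boldsymbol\gamma}=\tfrac12[R_{\boldsymbol\gamma\mathbf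 A}R_{N_{\mathbf S}}+\mathrm{Id}]$, $T_{2,\gamma}=\mathrm{Id}-\gamma\mathbf BJ_{N_{\mathbf S}}$. *)

theory Defs
  imports "HOL-Analysis.Analysis"
begin

definition monotone_op :: "('a::real_inner \<Rightarrow> 'a set) \<Rightarrow> bool" where
  "monotone_op A \<longleftrightarrow> (\<forall>x y u v. u \<in> A x \<longrightarrow> v \<in> A y \<longrightarrow> inner (x - y) (u - v) \<ge> 0)"

definition maximal_monotone :: "('a::real_inner \<Rightarrow> 'a set) \<Rightarrow> bool" where
  "maximal_monotone A \<longleftrightarrow> monotone_op A \<and>
     (\<forall>B. monotone_op B \<and> (\<forall>x. A x \<subseteq> B x) \<longrightarrow> B = A)"

definition nonexpansive :: "('a::real_normed_vector \<Rightarrow> 'a) \<Rightarrow> bool" where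
  "nonexpansive R \<longleftrightarrow> (\<forall>x y. norm (R x - R y) \<le> norm (x - y))"

definition averaged :: "real \<Rightarrow> ('a::real_normed_vector \<Rightarrow> 'a) \<Rightarrow> bool" where
  "averaged \<alpha> T \<longleftrightarrow> 0 < \<alpha> \<and> \<alpha> < 1 \<and>
     (\<exists>R. nonexpansive R \<and> (\<forall>x. T x = (1 - \<alpha>) *\<^sub>R x + \<alpha> *\<^sub>R R x))"

definition firmly_nonexpansive :: "('a::real_normed_vector \<Rightarrow> 'a) \<Rightarrow> bool" where
  "firmly_nonexpansive T \<longleftrightarrow> averaged (1/2) T"

definition pinner :: "('i::finite \<Rightarrow> real) \<Rightarrow> ('i \<Rightarrow> 'a::real_inner) \<Rightarrow> ('i \<Rightarrow> 'a) \<Rightarrow> real" where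
  "pinner \<omega> x y = (\<Sum>i\<in>UNIV. \<omega> i * inner (x i) (y i))"

definition pnorm :: "('i::finite \<Rightarrow> real) \<Rightarrow> ('i \<Rightarrow> 'a::real_inner) \<Rightarrow> real" where
  "pnorm \<omega> x = sqrt (pinner \<omega> x x)"

definition pnonexpansive :: "('i::finite \<Rightarrow> real) \<Rightarrow> (('i \<Rightarrow> 'a::real_inner) \<Rightarrow> ('i \<Rightarrow> 'a)) \<Rightarrow> bool" where
  "pnonexpansive \<omega> R \<longleftrightarrow>
     (\<forall>x y. pnorm \<omega> (\<lambda>i. R x i - R y i) \<le> pnorm \<omega> (\<lambda>i. x i - y i))"

definition paveraged :: "('i::finite \<Rightarrow> real) \<Rightarrow> real \<Rightarrow> (('i \<Rightarrow> 'a::real_inner) \<Rightarrow> ('i \<Rightarrow> 'a)) \<Rightarrow> bool" where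
  "paveraged \<omega> \<alpha> T \<longleftrightarrow> 0 < \<alpha> \<and> \<alpha> < 1 \<and>
     (\<exists>R. pnonexpansive \<omega> R \<and> (\<forall>x. T x = (\<lambda>i. (1 - \<alpha>) *\<^sub>R x i + \<alpha> *\<^sub>R R x i)))"

definition presolvent :: "(('i \<Rightarrow> 'a::real_vector) \<Rightarrow> ('i \<Rightarrow> 'a) set) \<Rightarrow> ('i \<Rightarrow> 'a) \<Rightarrow> ('i \<Rightarrow> 'a)" where
  "presolvent A x = (THE p. (\<lambda>i. x i - p i) \<in> A p)"

definition preflection :: "(('i \<Rightarrow> 'a::real_vector) \<Rightarrow> ('i \<Rightarrow> 'a) set) \<Rightarrow> ('i \<Rightarrow> 'a) \<Rightarrow> ('i \<Rightarrow> 'a)" where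
  "preflection A x = (\<lambda>i. 2 *\<^sub>R presolvent A x i - x i)"

definition diagS :: "('i \<Rightarrow> 'a) set" where
  "diagS = {x. \<forall>i j. x i = x j}"

definition diagS_perp :: "('i::finite \<Rightarrow> real) \<Rightarrow> ('i \<Rightarrow> 'a::real_inner) set" where
  "diagS_perp \<omega> = {y. \<forall>x\<in>diagS. pinner \<omega> x y = 0}"

definition normal_cone_S :: "('i::finite \<Rightarrow> real) \<Rightarrow> ('i \<Rightarrow> 'a::real_inner) \<Rightarrow> ('i \<Rightarrow> 'a) set" where
  "normal_cone_S \<omega> x = (if x \<in> diagS then diagS_perp \<omega> else {})"

definition scaled_prod_op :: "('i \<Rightarrow> real) \<Rightarrow> ('i \<Rightarrow> 'a \<Rightarrow> 'a::real_vector set) \<Rightarrow> ('i \<Rightarrow> 'a) \<Rightarrow> ('i \<Rightarrow> 'a) set" where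
  "scaled_prod_op g A x = {u. \<forall>i. u i \<in> (\<lambda>v. g i *\<^sub>R v) ` A i (x i)}"

definition diag_op :: "('a \<Rightarrow> 'a) \<Rightarrow> ('i \<Rightarrow> 'a) \<Rightarrow> ('i \<Rightarrow> 'a)" where
  "diag_op B x = (\<lambda>i. B (x i))"

text \<open>T_{1,\<gamma>} = 1/2 (R_{\<gamma>A} R_{N_S} + Id) and T_{2,\<gamma>} = Id - \<gamma> B J_{N_S}.\<close>
definition T1 :: "('i::finite \<Rightarrow> real) \<Rightarrow> ('i \<Rightarrow> real) \<Rightarrow> ('i \<Rightarrow> 'a \<Rightarrow> 'a::real_inner set) \<Rightarrow> ('i \<Rightarrow> 'a) \<Rightarrow> ('i \<Rightarrow> 'a)" where
  "T1 \<omega> g A x = (\<lambda>i. (1/2) *\<^sub>R (preflection (scaled_prod_op g A) (preflection (normal_cone_S \<omega>) x) i + x i))"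

definition T2 :: "('i::finite \<Rightarrow> real) \<Rightarrow> real \<Rightarrow> ('a \<Rightarrow> 'a::real_inner) \<Rightarrow> ('i \<Rightarrow> 'a) \<Rightarrow> ('i \<Rightarrow> 'a)" where
  "T2 \<omega> \<gamma> B x = (\<lambda>i. x i - \<gamma> *\<^sub>R diag_op B (presolvent (normal_cone_S \<omega>) x) i)"

end

theory Submission
  imports Defs
begin


definition monoset :: "('a::real_inner \<times> 'a) set \<Rightarrow> bool" where
  "monoset G \<longleftrightarrow> (\<forall>g\<in>G. \<forall>h\<in>G. inner (fst g - fst h) (snd g - snd h) \<ge> 0)"

lemma mono_avg:
  fixes G :: "('a::real_inner \<times> 'a) set"
  assumes fin: "finite G" and mon: "monoset G" and pos: "\<forall>g\<in>G. 0 \<le> l g" and s1: "sum l G = 1"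
  shows "inner (\<Sum>g\<in>G. l g *\<^sub>R fst g) (\<Sum>g\<in>G. l g *\<^sub>R snd g) \<le> (\<Sum>g\<in>G. l g * inner (fst g) (snd g))"
proof -
  let ?S = "\<lambda>g h. l g * l h * inner (fst g - fst h) (snd g - snd h)"
  have "0 \<le> (\<Sum>g\<in>G. \<Sum>h\<in>G. ?S g h)"
    using mon pos unfolding monoset_def by (intro sum_nonneg) auto
  also have "(\<Sum>g\<in>G. \<Sum>h\<in>G. ?S g h) =
     (\<Sum>g\<in>G. \<Sum>h\<in>G. l g * l h * inner (fst g) (snd g)) + (\<Sum>g\<in>G. \<Sum>h\<in>G. l g * l h * inner (fst h) (snd h))
     - (\<Sum>g\<in>G. \<Sum>h\<in>G. l g * l h * inner (fst g) (snd h)) - (\<Sum>g\<in>G. \<Sum>h\<in>G. l g * l h * inner (fst h) (snd g))"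
    by (simp add: inner_diff_left inner_diff_right algebra_simps sum_subtractf sum.distrib)
  also have "(\<Sum>g\<in>G. \<Sum>h\<in>G. l g * l h * inner (fst g) (snd g)) = (\<Sum>g\<in>G. l g * inner (fst g) (snd g))"
    by (simp add: sum_distrib_left[symmetric] sum_distrib_right[symmetric] s1 mult.assoc mult.commute mult.left_commute)
  also have "(\<Sum>g\<in>G. \<Sum>h\<in>G. l g * l h * inner (fst h) (snd h)) = (\<Sum>g\<in>G. l g * inner (fst g) (snd g))"
    by (simp add: sum_distrib_left[symmetric] sum_distrib_right[symmetric] s1 mult.assoc)
  also have "(\<Sum>g\<in>G. \<Sum>h\<in>G. l g * l h * inner (fst g) (snd h)) = inner (\<Sum>g\<in>G. l g *\<^sub>R fst g) (\<Sum>g\<in>G. l g *\<^sub>R snd g)"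
    apply (simp add: inner_sum_left inner_sum_right sum_distrib_left mult.assoc)
    apply (subst sum.swap) apply (simp add: algebra_simps)
    done
  also have "(\<Sum>g\<in>G. \<Sum>h\<in>G. l g * l h * inner (fst h) (snd g)) = inner (\<Sum>g\<in>G. l g *\<^sub>R fst g) (\<Sum>g\<in>G. l g *\<^sub>R snd g)"
    by (simp add: inner_sum_left inner_sum_right sum_distrib_left mult.assoc)
  finally show ?thesis by simp
qed



lemma finite_step:
  fixes G :: "('a::real_inner \<times> 'a) set"
  assumes fin: "finite G" and mon: "monoset G"
  shows "\<exists>x. \<forall>g\<in>G. inner (x - fst g) (x + snd g) \<le> 0"
proof (cases "G = {}")
  case True then show ?thesis by simp
next
  case False
  define q where "q = (\<lambda>g::'a\<times>'a. ((1/2) *\<^sub>R (fst g - snd g), (- inner (fst g) (snd g), fst g)))"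
  have injq: "inj_on q G"
  proof (rule inj_onI)
    fix g h assume "g \<in> G" "h \<in> G" "q g = q h"
    then have "fst g = fst h" "fst g - snd g = fst h - snd h" by (auto simp: q_def)
    then show "g = h" by (simp add: prod_eq_iff)
  qed
  define M where "M = convex hull (q ` G)"
  have cM: "compact M" unfolding M_def using fin by (simp add: finite_imp_compact_convex_hull)
  have neM: "M \<noteq> {}" unfolding M_def using False by simp
  define \<Psi> where "\<Psi> = (\<lambda>z::'a \<times> real \<times> 'a. fst (snd z) - (norm (fst z))\<^sup>2)"
  have contP: "continuous_on M \<Psi>" unfolding \<Psi>_def by (intro continuous_intros)
  obtain z where zM: "z \<in> M" and zmax: "\<forall>w\<in>M. \<Psi> w \<le> \<Psi> z"
    using continuous_attains_sup[OF cM neM contP] by blast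
  have A: "\<Psi> z \<le> 0"
  proof -
    have fq: "finite (q ` G)" using fin by simp
    obtain u where u0: "\<forall>k\<in>q`G. 0 \<le> u k" and u1: "sum u (q ` G) = 1" and uz: "(\<Sum>k\<in>q`G. u k *\<^sub>R k) = z"
      using zM unfolding M_def convex_hull_finite[OF fq] by blast
    define l where "l = (\<lambda>g. u (q g))"
    have l0: "\<forall>g\<in>G. 0 \<le> l g" using u0 by (simp add: l_def)
    have l1: "sum l G = 1" using u1 by (simp add: l_def sum.reindex[OF injq])
    have zz: "z = (\<Sum>g\<in>G. l g *\<^sub>R q g)" using uz by (simp add: l_def sum.reindex[OF injq])
    define a where "a = (\<Sum>g\<in>G. l g *\<^sub>R fst g)"
    define b where "b = (\<Sum>g\<in>G. l g *\<^sub>R snd g)"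
    have f1: "fst z = (1/2) *\<^sub>R (a - b)"
      unfolding zz a_def b_def by (simp add: fst_sum q_def scaleR_sum_right sum_subtractf algebra_simps)
    have f2: "fst (snd z) = - (\<Sum>g\<in>G. l g * inner (fst g) (snd g))"
      unfolding zz by (simp add: fst_sum snd_sum q_def sum_negf)
    have ab: "inner a b \<le> (\<Sum>g\<in>G. l g * inner (fst g) (snd g))"
      using mono_avg[OF fin mon l0 l1] by (simp add: a_def b_def)
    have "\<Psi> z \<le> - inner a b - (norm ((1/2) *\<^sub>R (a - b)))\<^sup>2"
      unfolding \<Psi>_def f1 f2 using ab by simp
    also have "\<dots> = - (norm ((1/2) *\<^sub>R (a + b)))\<^sup>2"
      by (simp add: power2_norm_eq_inner inner_add_left inner_add_right inner_diff_left inner_diff_right inner_commute algebra_simps)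
    also have "\<dots> \<le> 0" by simp
    finally show ?thesis .
  qed
  have B: "inner (fst z - fst g) (fst z + snd g) \<le> \<Psi> z" if gG: "g \<in> G" for g
  proof -
    define y where "y = fst z"
    define s where "s = fst (snd z)"
    define c where "c = (1/2) *\<^sub>R (fst g - snd g)"
    define \<sigma> where "\<sigma> = - inner (fst g) (snd g)"
    define D where "D = \<sigma> - s - 2 * inner y (c - y)"
    define Q where "Q = (norm (c - y))\<^sup>2"
    have qgM: "q g \<in> M" unfolding M_def using gG by (simp add: hull_inc)
    have key: "t * D \<le> t\<^sup>2 * Q" if t0: "0 \<le> t" and t1: "t \<le> 1" for t
    proof -
      have "z + t *\<^sub>R (q g - z) \<in> M"
      proof -
        have "z + t *\<^sub>R (q g - z) = (1 - t) *\<^sub>R z + t *\<^sub>R q g" by (simp add: algebra_simps)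
        moreover have "convex M" unfolding M_def by simp
        ultimately show ?thesis using zM qgM t0 t1 by (simp add: convex_def)
      qed
      then have le: "\<Psi> (z + t *\<^sub>R (q g - z)) \<le> \<Psi> z" using zmax by blast
      have "\<Psi> (z + t *\<^sub>R (q g - z)) = s + t * (\<sigma> - s) - (norm (y + t *\<^sub>R (c - y)))\<^sup>2"
        by (simp add: \<Psi>_def q_def y_def s_def c_def \<sigma>_def)
      also have "(norm (y + t *\<^sub>R (c - y)))\<^sup>2 = (norm y)\<^sup>2 + 2 * t * inner y (c - y) + t\<^sup>2 * Q"
        unfolding Q_def power2_norm_eq_inner
        by (simp add: inner_add_left inner_add_right inner_diff_left inner_diff_right inner_commute power2_eq_square algebra_simps)
      finally have "\<Psi> (z + t *\<^sub>R (q g - z)) = \<Psi> z + t * D - t\<^sup>2 * Q"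
        by (simp add: \<Psi>_def D_def y_def s_def algebra_simps)
      with le show ?thesis by simp
    qed
    have D0: "D \<le> 0"
    proof (rule ccontr)
      assume "\<not> D \<le> 0"
      then have Dp: "D > 0" by simp
      have Q0: "Q \<ge> 0" by (simp add: Q_def)
      define t where "t = min 1 (D / (Q + 1))"
      have t0: "0 < t" using Dp Q0 by (simp add: t_def)
      have t1: "t \<le> 1" by (simp add: t_def)
      have "t * Q < D"
      proof -
        have "t * Q \<le> D / (Q + 1) * Q" using Q0 by (intro mult_right_mono) (auto simp: t_def)
        also have "\<dots> < D" using Dp Q0 by (simp add: field_simps)
        finally show ?thesis .
      qed
      then have "t * (t * Q) < t * D" using t0 by simp
      with key[OF _ t1] t0 show False by (simp add: power2_eq_square mult.assoc)
    qed
    have "inner (y - fst g) (y + snd g) = (norm y)\<^sup>2 - 2 * inner y c + \<sigma>"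
      by (simp add: c_def \<sigma>_def power2_norm_eq_inner inner_add_left inner_add_right inner_diff_left inner_diff_right inner_commute algebra_simps)
    also have "\<dots> \<le> s - (norm y)\<^sup>2" using D0
      by (simp add: D_def inner_diff_right power2_norm_eq_inner algebra_simps)
    finally show ?thesis by (simp add: \<Psi>_def y_def s_def)
  qed
  show ?thesis using A B by (intro exI[of _ "fst z"]) (meson order_trans)
qed



lemma aux1: "(A::real) \<le> 0 \<Longrightarrow> B \<le> 0 \<Longrightarrow> 0 \<le> C \<Longrightarrow> (A + B)/2 - C/4 \<le> 0" by (simp add: field_simps)
lemma aux2: "0 \<le> (a::real) + b - 2*c \<Longrightarrow> c \<le> a/2 + b/2" by (simp add: field_simps)
lemma aux3: "(X::real) \<le> X/2 + M/2 + P \<Longrightarrow> X \<le> M + 2*\<bar>P\<bar>" by (simp add: field_simps)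

definition Iset :: "('a::real_inner \<times> 'a) set \<Rightarrow> 'a set" where
  "Iset F = {x. \<forall>g\<in>F. inner (x - fst g) (x + snd g) \<le> 0}"

definition eF :: "('a::real_inner \<times> 'a) set \<Rightarrow> real" where
  "eF F = Inf ((\<lambda>x. (norm x)\<^sup>2) ` Iset F)"

lemma monoset_subset: "monoset G \<Longrightarrow> F \<subseteq> G \<Longrightarrow> monoset F"
  unfolding monoset_def by blast

lemma Iset_ne: "finite F \<Longrightarrow> monoset F \<Longrightarrow> Iset F \<noteq> {}"
  using finite_step[of F] unfolding Iset_def by auto

lemma bddb: "bdd_below ((\<lambda>x. (norm x)\<^sup>2) ` S)"
  by (rule bdd_belowI[of _ 0]) auto

lemma eF_le: "x \<in> Iset F \<Longrightarrow> eF F \<le> (norm x)\<^sup>2"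
  unfolding eF_def by (rule cInf_lower[OF _ bddb]) auto

lemma eF_approx: "Iset F \<noteq> {} \<Longrightarrow> 0 < d \<Longrightarrow> \<exists>x\<in>Iset F. (norm x)\<^sup>2 < eF F + d"
  using cInf_lessD[of "(\<lambda>x. (norm x)\<^sup>2) ` Iset F" "eF F + d"] unfolding eF_def by auto

lemma Iset_anti: "F \<subseteq> F' \<Longrightarrow> Iset F' \<subseteq> Iset F"
  unfolding Iset_def by auto

lemma eF_mono: "F \<subseteq> F' \<Longrightarrow> Iset F' \<noteq> {} \<Longrightarrow> eF F \<le> eF F'"
  unfolding eF_def by (rule cInf_superset_mono) (auto simp: bddb dest: Iset_anti)

lemma mid_eq: fixes x y a b :: "'a::real_inner"
  shows "inner ((1/2) *\<^sub>R (x+y) - a) ((1/2) *\<^sub>R (x+y) + b) = (inner (x-a) (x+b) + inner (y-a) (y+b))/2 - (norm(x-y))\<^sup>2/4"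
  unfolding power2_norm_eq_inner
  by (simp add: inner_add_left inner_add_right inner_diff_left inner_diff_right inner_commute algebra_simps) (simp add: field_simps)

lemma Iset_mid: assumes "x \<in> Iset F" "y \<in> Iset F" shows "(1/2) *\<^sub>R (x + y) \<in> Iset F"
  unfolding Iset_def
proof (intro CollectI ballI)
  fix g assume g: "g \<in> F"
  have A: "inner (x - fst g) (x + snd g) \<le> 0" "inner (y - fst g) (y + snd g) \<le> 0" using assms g unfolding Iset_def by auto
  have "inner ((1/2) *\<^sub>R (x + y) - fst g) ((1/2) *\<^sub>R (x + y) + snd g) = (inner (x - fst g) (x + snd g) + inner (y - fst g) (y + snd g))/2 - (norm(x-y))\<^sup>2/4"
    by (rule mid_eq)
  also have "\<dots> \<le> 0"
  proof -
    have N: "0 \<le> (norm(x-y))\<^sup>2/4" by simp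
    show ?thesis using A by (intro aux1) auto
  qed
  finally show "inner ((1/2) *\<^sub>R (x + y) - fst g) ((1/2) *\<^sub>R (x + y) + snd g) \<le> 0" .
qed

lemma par_bound: assumes "x \<in> Iset F" "y \<in> Iset F"
  shows "(norm (x - y))\<^sup>2 \<le> 2 * (norm x)\<^sup>2 + 2 * (norm y)\<^sup>2 - 4 * eF F"
proof -
  have "eF F \<le> (norm ((1/2) *\<^sub>R (x + y)))\<^sup>2" by (rule eF_le[OF Iset_mid[OF assms]])
  moreover have "(norm (x - y))\<^sup>2 = 2 * (norm x)\<^sup>2 + 2 * (norm y)\<^sup>2 - 4 * (norm ((1/2) *\<^sub>R (x + y)))\<^sup>2"
    unfolding power2_norm_eq_inner
    by (simp add: inner_add_left inner_add_right inner_diff_left inner_diff_right inner_commute algebra_simps)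
  ultimately show ?thesis by linarith
qed

lemma close_bound: assumes "x \<in> Iset F" "y \<in> Iset F" "E - d < eF F"
  "(norm x)\<^sup>2 \<le> E + d" "(norm y)\<^sup>2 \<le> E + d"
  shows "(norm (x - y))\<^sup>2 \<le> 8 * d"
  using par_bound[OF assms(1,2)] assms(3-5) by linarith

lemma Iset_bound: assumes "x \<in> Iset F" "g \<in> F"
  shows "(norm x)\<^sup>2 \<le> (norm (fst g - snd g))\<^sup>2 + 2 * \<bar>inner (fst g) (snd g)\<bar>"
proof -
  let ?a = "fst g" and ?b = "snd g"
  have "inner (x - ?a) (x + ?b) \<le> 0" using assms unfolding Iset_def by auto
  then have "(norm x)\<^sup>2 \<le> inner x (?a - ?b) + inner ?a ?b"
    unfolding power2_norm_eq_inner
    by (simp add: inner_add_left inner_add_right inner_diff_left inner_diff_right inner_commute algebra_simps)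
  also have "inner x (?a - ?b) \<le> norm x * norm (?a - ?b)" by (rule norm_cauchy_schwarz)
  also have "norm x * norm (?a - ?b) \<le> (norm x)\<^sup>2 / 2 + (norm (?a - ?b))\<^sup>2 / 2"
  proof -
    have "0 \<le> (norm x - norm (?a - ?b))\<^sup>2" by simp
    then show ?thesis unfolding power2_diff by (intro aux2) (simp add: algebra_simps)
  qed
  finally show ?thesis by (intro aux3) simp
qed

lemma inf_step:
  fixes G :: "('a::{real_inner,complete_space} \<times> 'a) set"
  assumes mon: "monoset G"
  shows "\<exists>x. \<forall>g\<in>G. inner (x - fst g) (x + snd g) \<le> 0"
proof (cases "G = {}")
  case True then show ?thesis by simp
next
  case False
  then obtain g0 where g0: "g0 \<in> G" by blast
  define Rb where "Rb = (norm (fst g0 - snd g0))\<^sup>2 + 2 * \<bar>inner (fst g0) (snd g0)\<bar>"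
  let ?FS = "{F. finite F \<and> F \<subseteq> G}"
  have ne: "finite F \<Longrightarrow> F \<subseteq> G \<Longrightarrow> Iset F \<noteq> {}" for F
    using Iset_ne monoset_subset[OF mon] by blast
  have eb: "eF F \<le> Rb" if "finite F" "F \<subseteq> G" for F
  proof -
    have "Iset (insert g0 F) \<noteq> {}" using ne that g0 by simp
    then obtain x where x: "x \<in> Iset (insert g0 F)" by blast
    have "eF F \<le> eF (insert g0 F)" by (rule eF_mono) (use x in auto)
    also have "\<dots> \<le> (norm x)\<^sup>2" by (rule eF_le[OF x])
    also have "\<dots> \<le> Rb" unfolding Rb_def by (rule Iset_bound[OF x]) simp
    finally show ?thesis .
  qed
  define E where "E = Sup (eF ` ?FS)"
  have bddE: "bdd_above (eF ` ?FS)" using eb by (intro bdd_aboveI[of _ Rb]) auto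
  have neE: "eF ` ?FS \<noteq> {}" by auto
  have eE: "finite F \<Longrightarrow> F \<subseteq> G \<Longrightarrow> eF F \<le> E" for F
    unfolding E_def by (rule cSup_upper[OF _ bddE]) auto
  define \<delta> where "\<delta> = (\<lambda>n::nat. inverse (real (Suc n)))"
  have \<delta>p: "0 < \<delta> n" for n by (simp add: \<delta>_def)
  have \<delta>mono: "m \<ge> n \<Longrightarrow> \<delta> m \<le> \<delta> n" for m n by (simp add: \<delta>_def le_imp_inverse_le)
  have "\<forall>n. \<exists>F. finite F \<and> F \<subseteq> G \<and> E - \<delta> n < eF F"
  proof
    fix n
    have "E - \<delta> n < E" using \<delta>p[of n] by simp
    then have "E - \<delta> n < Sup (eF ` ?FS)" by (simp add: E_def)
    then obtain y where "y \<in> eF ` ?FS" "E - \<delta> n < y" using less_cSupE[OF _ neE] by blast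
    then show "\<exists>F. finite F \<and> F \<subseteq> G \<and> E - \<delta> n < eF F" by auto
  qed
  then obtain Fs where Fs: "\<And>n. finite (Fs n) \<and> Fs n \<subseteq> G \<and> E - \<delta> n < eF (Fs n)" by metis
  define H where "H = (\<lambda>n. \<Union>k\<le>n. Fs k)"
  have Hfin: "finite (H n)" "H n \<subseteq> G" for n using Fs by (auto simp: H_def)
  have Hmono: "m \<ge> n \<Longrightarrow> H n \<subseteq> H m" for m n unfolding H_def by (intro UN_mono) auto
  have HE: "E - \<delta> n < eF (H n)" for n
  proof -
    have "Iset (H n) \<noteq> {}" using ne Hfin by blast
    moreover have "Fs n \<subseteq> H n" by (auto simp: H_def)
    ultimately have "eF (Fs n) \<le> eF (H n)" by (intro eF_mono)
    with Fs[of n] show ?thesis by simp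
  qed
  have "\<forall>n. \<exists>x\<in>Iset (H n). (norm x)\<^sup>2 < eF (H n) + \<delta> n"
    using eF_approx ne[OF Hfin] \<delta>p by blast
  then obtain x where x: "\<And>n. x n \<in> Iset (H n)" "\<And>n. (norm (x n))\<^sup>2 < eF (H n) + \<delta> n" by metis
  have xb: "(norm (x n))\<^sup>2 \<le> E + \<delta> n" for n using x(2)[of n] eE[OF Hfin] by (meson add_le_cancel_right less_imp_le order_trans)
  have xclose: "(norm (x m - x n))\<^sup>2 \<le> 8 * \<delta> n" if "m \<ge> n" for m n
  proof (rule close_bound[OF _ x(1)[of n] HE])
    show "x m \<in> Iset (H n)" using x(1)[of m] Iset_anti[OF Hmono[OF that]] by blast
    show "(norm (x m))\<^sup>2 \<le> E + \<delta> n" using xb[of m] \<delta>mono[OF that] by linarith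
    show "(norm (x n))\<^sup>2 \<le> E + \<delta> n" by (rule xb)
  qed
  have \<delta>0: "\<delta> \<longlonglongrightarrow> 0" unfolding \<delta>_def by (rule LIMSEQ_inverse_real_of_nat)
  have sq0: "(\<lambda>n. sqrt (8 * \<delta> n)) \<longlonglongrightarrow> 0"
    using tendsto_real_sqrt[OF tendsto_mult_right_zero[OF \<delta>0, of 8]] by simp
  have nsq: "norm v \<le> sqrt (8 * \<delta> n)" if "(norm v)\<^sup>2 \<le> 8 * \<delta> n" for v n
    using that real_le_rsqrt by blast
  have "Cauchy x"
  proof (rule metric_CauchyI)
    fix e :: real assume e: "0 < e"
    have "eventually (\<lambda>n. sqrt (8 * \<delta> n) < e) sequentially"
      using order_tendstoD(2)[OF sq0 e] .
    then obtain N where N: "sqrt (8 * \<delta> N) < e" by (meson eventually_sequentially order_refl)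
    show "\<exists>M. \<forall>m\<ge>M. \<forall>n\<ge>M. dist (x m) (x n) < e"
    proof (intro exI allI impI)
      fix m n assume mn: "N \<le> m" "N \<le> n"
      have "x m \<in> Iset (H N)" "x n \<in> Iset (H N)"
        using x(1) Iset_anti[OF Hmono] mn by blast+
      have "(norm (x m - x n))\<^sup>2 \<le> 8 * \<delta> N"
      proof (rule close_bound[OF \<open>x m \<in> Iset (H N)\<close> \<open>x n \<in> Iset (H N)\<close> HE])
        show "(norm (x m))\<^sup>2 \<le> E + \<delta> N" using xb[of m] \<delta>mono[OF mn(1)] by linarith
        show "(norm (x n))\<^sup>2 \<le> E + \<delta> N" using xb[of n] \<delta>mono[OF mn(2)] by linarith
      qed
      then have "norm (x m - x n) \<le> sqrt (8 * \<delta> N)" by (rule nsq)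
      then show "dist (x m) (x n) < e" using N by (simp add: dist_norm)
    qed
  qed
  then obtain L where L: "x \<longlonglongrightarrow> L" using Cauchy_convergent_iff convergent_def by blast
  show ?thesis
  proof (intro exI ballI)
    fix g assume gG: "g \<in> G"
    have "\<forall>n. \<exists>y\<in>Iset (insert g (H n)). (norm y)\<^sup>2 < eF (insert g (H n)) + \<delta> n"
    proof
      fix n
      have "Iset (insert g (H n)) \<noteq> {}" using ne Hfin gG by simp
      then show "\<exists>y\<in>Iset (insert g (H n)). (norm y)\<^sup>2 < eF (insert g (H n)) + \<delta> n"
        using eF_approx \<delta>p by blast
    qed
    then obtain y where y: "\<And>n. y n \<in> Iset (insert g (H n))" "\<And>n. (norm (y n))\<^sup>2 < eF (insert g (H n)) + \<delta> n" by metis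
    have yb: "(norm (y n))\<^sup>2 \<le> E + \<delta> n" for n
    proof -
      have "eF (insert g (H n)) \<le> E" using Hfin gG by (intro eE) auto
      then show ?thesis using y(2)[of n] by linarith
    qed
    have yclose: "norm (y n - x n) \<le> sqrt (8 * \<delta> n)" for n
    proof (rule nsq, rule close_bound[OF _ x(1)[of n] HE])
      show "y n \<in> Iset (H n)" using y(1)[of n] Iset_anti[of "H n" "insert g (H n)"] by blast
      show "(norm (y n))\<^sup>2 \<le> E + \<delta> n" by (rule yb)
      show "(norm (x n))\<^sup>2 \<le> E + \<delta> n" by (rule xb)
    qed
    have "(\<lambda>n. y n - x n) \<longlonglongrightarrow> 0"
      by (rule Lim_null_comparison[OF _ sq0]) (use yclose in simp)
    then have "(\<lambda>n. (y n - x n) + x n) \<longlonglongrightarrow> 0 + L" using L by (intro tendsto_add)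
    then have yL: "y \<longlonglongrightarrow> L" by simp
    have "(\<lambda>n. inner (y n - fst g) (y n + snd g)) \<longlonglongrightarrow> inner (L - fst g) (L + snd g)"
      by (intro tendsto_intros yL)
    moreover have "\<forall>n. inner (y n - fst g) (y n + snd g) \<le> 0" using y(1) unfolding Iset_def by auto
    ultimately show "inner (L - fst g) (L + snd g) \<le> 0" by (meson LIMSEQ_le_const2)
  qed
qed



definition res :: "real \<Rightarrow> ('a::real_vector \<Rightarrow> 'a set) \<Rightarrow> 'a \<Rightarrow> 'a" where
  "res t A z = (THE p. z - p \<in> (\<lambda>v. t *\<^sub>R v) ` A p)"

lemma res_exists:
  fixes A :: "'a::{real_inner,complete_space} \<Rightarrow> 'a set"
  assumes mm: "maximal_monotone A" and t: "0 < t"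
  shows "\<exists>p. z - p \<in> (\<lambda>v. t *\<^sub>R v) ` A p"
proof -
  have monA: "monotone_op A" using mm unfolding maximal_monotone_def by blast
  define G where "G = {(a - z, t *\<^sub>R u) | a u. u \<in> A a}"
  have "monoset G"
    unfolding monoset_def G_def
  proof (clarsimp)
    fix a u a' u' assume "u \<in> A a" "u' \<in> A a'"
    then have "0 \<le> inner (a - a') (u - u')" using monA unfolding monotone_op_def by blast
    then show "0 \<le> inner (a - a') (t *\<^sub>R u - t *\<^sub>R u')"
      using t by (simp add: scaleR_diff_right[symmetric])
  qed
  then obtain y where y: "\<forall>g\<in>G. inner (y - fst g) (y + snd g) \<le> 0" using inf_step by blast
  define p where "p = y + z"
  define w where "w = (1/t) *\<^sub>R (z - p)"
  have rel: "0 \<le> inner (p - a) (w - u)" if "u \<in> A a" for a u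
  proof -
    have "(a - z, t *\<^sub>R u) \<in> G" using that unfolding G_def by blast
    then have "inner (y - (a - z)) (y + t *\<^sub>R u) \<le> 0" using y by auto
    then have "inner (p - a) (t *\<^sub>R u - (z - p)) \<le> 0" unfolding p_def by (simp add: algebra_simps)
    then have "0 \<le> inner (p - a) ((z - p) - t *\<^sub>R u)"
      by (simp add: inner_diff_right)
    also have "(z - p) - t *\<^sub>R u = t *\<^sub>R (w - u)" using t by (simp add: w_def algebra_simps)
    finally show ?thesis using t by (simp add: zero_le_mult_iff)
  qed
  define B where "B = (\<lambda>x. if x = p then insert w (A p) else A x)"
  have "monotone_op B"
    unfolding monotone_op_def
  proof (intro allI impI)
    fix x x' u u' assume u: "u \<in> B x" and u': "u' \<in> B x'"
    consider "x = p" "u = w" | "u \<in> A x" using u unfolding B_def by (auto split: if_splits)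
    then show "0 \<le> inner (x - x') (u - u')"
    proof cases
      case 1
      consider "x' = p" "u' = w" | "u' \<in> A x'" using u' unfolding B_def by (auto split: if_splits)
      then show ?thesis
      proof cases
        case 1 then show ?thesis using \<open>x = p\<close> \<open>u = w\<close> by simp
      next
        case 2 then show ?thesis using 1 rel by blast
      qed
    next
      case 2
      consider "x' = p" "u' = w" | "u' \<in> A x'" using u' unfolding B_def by (auto split: if_splits)
      then show ?thesis
      proof cases
        case 1
        have "0 \<le> inner (p - x) (w - u)" using rel 2 by blast
        also have "inner (p - x) (w - u) = inner (x - x') (u - u')" using 1
          by (simp add: inner_diff_left inner_diff_right algebra_simps)
        finally show ?thesis .
      next
        case 3: 2 then show ?thesis using 2 monA unfolding monotone_op_def by blast
      qed
    qed
  qed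
  moreover have "\<forall>x. A x \<subseteq> B x" unfolding B_def by auto
  ultimately have "B = A" using mm unfolding maximal_monotone_def by blast
  moreover have "w \<in> B p" unfolding B_def by simp
  ultimately have "w \<in> A p" by simp
  moreover have "z - p = t *\<^sub>R w" using t by (simp add: w_def)
  ultimately show ?thesis by blast
qed

lemma res_unique:
  fixes A :: "'a::real_inner \<Rightarrow> 'a set"
  assumes monA: "monotone_op A" and t: "0 < t"
    and p: "z - p \<in> (\<lambda>v. t *\<^sub>R v) ` A p" and q: "z - q \<in> (\<lambda>v. t *\<^sub>R v) ` A q"
  shows "p = q"
proof -
  obtain u v where u: "u \<in> A p" "z - p = t *\<^sub>R u" and v: "v \<in> A q" "z - q = t *\<^sub>R v" using p q by blast
  have "0 \<le> inner (p - q) (u - v)" using monA u v unfolding monotone_op_def by blast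
  moreover have "u - v = (1/t) *\<^sub>R (q - p)"
  proof -
    have "t *\<^sub>R (u - v) = q - p" using u v by (simp add: algebra_simps)
    moreover have "u - v = (1/t) *\<^sub>R (t *\<^sub>R (u - v))" using t by simp
    ultimately show ?thesis by simp
  qed
  ultimately have "0 \<le> (1/t) * inner (p - q) (q - p)" by simp
  then have "inner (p - q) (q - p) \<ge> 0" using t by (simp add: zero_le_divide_iff)
  moreover have "inner (p - q) (q - p) = - inner (p - q) (p - q)" by (simp add: inner_diff_right inner_diff_left inner_commute)
  ultimately have "inner (p - q) (p - q) \<le> 0" by simp
  then have "p - q = 0" by (metis inner_gt_zero_iff not_le)
  then show ?thesis by simp
qed

lemma res_spec:
  fixes A :: "'a::{real_inner,complete_space} \<Rightarrow> 'a set"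
  assumes mm: "maximal_monotone A" and t: "0 < t"
  shows "z - res t A z \<in> (\<lambda>v. t *\<^sub>R v) ` A (res t A z)"
    and "z - p \<in> (\<lambda>v. t *\<^sub>R v) ` A p \<Longrightarrow> p = res t A z"
proof -
  have monA: "monotone_op A" using mm unfolding maximal_monotone_def by blast
  obtain p0 where p0: "z - p0 \<in> (\<lambda>v. t *\<^sub>R v) ` A p0" using res_exists[OF mm t] by blast
  have eq: "res t A z = p0" unfolding res_def
  proof (rule the_equality)
    show "z - p0 \<in> (\<lambda>v. t *\<^sub>R v) ` A p0" by (rule p0)
    fix p assume "z - p \<in> (\<lambda>v. t *\<^sub>R v) ` A p"
    then show "p = p0" by (rule res_unique[OF monA t _ p0])
  qed
  show "z - res t A z \<in> (\<lambda>v. t *\<^sub>R v) ` A (res t A z)" using eq p0 by simp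
  show "z - p \<in> (\<lambda>v. t *\<^sub>R v) ` A p \<Longrightarrow> p = res t A z" using eq res_unique[OF monA t _ p0] by simp
qed

lemma res_firm:
  fixes A :: "'a::{real_inner,complete_space} \<Rightarrow> 'a set"
  assumes mm: "maximal_monotone A" and t: "0 < t"
  shows "(norm (res t A z - res t A z'))\<^sup>2 \<le> inner (res t A z - res t A z') (z - z')"
proof -
  have monA: "monotone_op A" using mm unfolding maximal_monotone_def by blast
  obtain u where u: "u \<in> A (res t A z)" "z - res t A z = t *\<^sub>R u" using res_spec(1)[OF mm t, of z] by blast
  obtain v where v: "v \<in> A (res t A z')" "z' - res t A z' = t *\<^sub>R v" using res_spec(1)[OF mm t, of z'] by blast
  have "0 \<le> inner (res t A z - res t A z') (u - v)" using monA u v unfolding monotone_op_def by blast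
  then have "0 \<le> t * inner (res t A z - res t A z') (u - v)" using t by simp
  also have "t * inner (res t A z - res t A z') (u - v) = inner (res t A z - res t A z') (t *\<^sub>R u - t *\<^sub>R v)"
    by (simp add: inner_diff_right algebra_simps)
  also have "\<dots> = inner (res t A z - res t A z') ((z - res t A z) - (z' - res t A z'))"
    by (simp only: u(2) v(2))
  finally show ?thesis unfolding power2_norm_eq_inner
    by (simp add: inner_diff_right inner_diff_left algebra_simps)
qed

lemma res_refl_ne:
  fixes A :: "'a::{real_inner,complete_space} \<Rightarrow> 'a set"
  assumes mm: "maximal_monotone A" and t: "0 < t"
  shows "(norm ((2 *\<^sub>R res t A z - z) - (2 *\<^sub>R res t A z' - z')))\<^sup>2 \<le> (norm (z - z'))\<^sup>2"
proof -
  let ?d = "res t A z - res t A z'"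
  have f: "(norm ?d)\<^sup>2 \<le> inner ?d (z - z')" by (rule res_firm[OF mm t])
  have "(norm ((2 *\<^sub>R res t A z - z) - (2 *\<^sub>R res t A z' - z')))\<^sup>2 = 4 * (norm ?d)\<^sup>2 - 4 * inner ?d (z - z') + (norm (z - z'))\<^sup>2"
    unfolding power2_norm_eq_inner
    by (simp add: inner_diff_right inner_diff_left inner_commute algebra_simps)
  then show ?thesis using f by linarith
qed



lemma firm_half:
  fixes r w :: "'v::real_inner"
  assumes "norm r \<le> norm w"
  shows "(norm ((1/2) *\<^sub>R (r + w)))\<^sup>2 \<le> inner ((1/2) *\<^sub>R (r + w)) w"
proof -
  have "(norm r)\<^sup>2 \<le> (norm w)\<^sup>2" using assms by (simp add: power_mono)
  moreover have "inner ((1/2) *\<^sub>R (r + w)) w - (norm ((1/2) *\<^sub>R (r + w)))\<^sup>2 = ((norm w)\<^sup>2 - (norm r)\<^sup>2) / 4"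
    unfolding power2_norm_eq_inner
    by (simp add: inner_add_left inner_add_right inner_commute algebra_simps)
  ultimately show ?thesis by (smt (verit, best) divide_nonneg_nonneg)
qed

lemma comb_ineq:
  fixes a b :: "'v::real_inner"
  assumes k2: "0 < k2"
  shows "k2 / (1 + k2) * (norm (a + b))\<^sup>2 \<le> k2 * (norm a)\<^sup>2 + (norm b)\<^sup>2"
proof -
  have "(1 + k2) * (k2 * (norm a)\<^sup>2 + (norm b)\<^sup>2) - k2 * (norm (a + b))\<^sup>2 = (norm (k2 *\<^sub>R a - b))\<^sup>2"
    unfolding power2_norm_eq_inner
    by (simp add: inner_add_left inner_add_right inner_diff_left inner_diff_right inner_commute algebra_simps power2_eq_square)
  then have "k2 * (norm (a + b))\<^sup>2 \<le> (1 + k2) * (k2 * (norm a)\<^sup>2 + (norm b)\<^sup>2)"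
    by (smt (verit) zero_le_power2)
  then show ?thesis using k2 by (simp add: field_simps)
qed

lemma comp_ineq:
  fixes u w v :: "'v::real_inner"
  assumes f: "(norm v)\<^sup>2 \<le> inner v w"
    and t2: "(norm w)\<^sup>2 + k2 * (norm (u - w))\<^sup>2 \<le> (norm u)\<^sup>2"
    and k2: "0 < k2" and k0: "0 \<le> k" and kk: "k \<le> k2 / (1 + k2)"
  shows "(norm v)\<^sup>2 + k * (norm (u - v))\<^sup>2 \<le> (norm u)\<^sup>2"
proof -
  have F: "(norm v)\<^sup>2 + (norm (w - v))\<^sup>2 \<le> (norm w)\<^sup>2"
  proof -
    have "(norm (w - v))\<^sup>2 = (norm w)\<^sup>2 - 2 * inner v w + (norm v)\<^sup>2"
      unfolding power2_norm_eq_inner by (simp add: inner_diff_left inner_diff_right inner_commute)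
    then show ?thesis using f by linarith
  qed
  have "u - v = (u - w) + (w - v)" by simp
  then have C: "k2 / (1 + k2) * (norm (u - v))\<^sup>2 \<le> k2 * (norm (u - w))\<^sup>2 + (norm (w - v))\<^sup>2"
    using comb_ineq[OF k2, of "u - w" "w - v"] by simp
  have "k * (norm (u - v))\<^sup>2 \<le> k2 / (1 + k2) * (norm (u - v))\<^sup>2"
    using kk by (intro mult_right_mono) auto
  then show ?thesis using C F t2 by linarith
qed

lemma avg_from_ineq:
  fixes u v :: "'v::real_inner"
  assumes a0: "0 < \<alpha>" and a1: "\<alpha> < 1"
    and h: "(norm v)\<^sup>2 + ((1 - \<alpha>) / \<alpha>) * (norm (u - v))\<^sup>2 \<le> (norm u)\<^sup>2"
  shows "norm ((1/\<alpha>) *\<^sub>R (v - (1 - \<alpha>) *\<^sub>R u)) \<le> norm u"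
proof -
  define X where "X = inner v v"
  define Y where "Y = inner u v"
  define Z where "Z = inner u u"
  have h1: "X + ((1 - \<alpha>) / \<alpha>) * (Z - 2 * Y + X) \<le> Z"
    using h unfolding X_def Y_def Z_def power2_norm_eq_inner
    by (simp add: inner_diff_left inner_diff_right inner_commute algebra_simps)
  have "\<alpha> * (X + ((1 - \<alpha>) / \<alpha>) * (Z - 2 * Y + X)) \<le> \<alpha> * Z"
    using h1 a0 by (simp add: mult_left_mono)
  moreover have "\<alpha> * (X + ((1 - \<alpha>) / \<alpha>) * (Z - 2 * Y + X)) = \<alpha> * X + (1 - \<alpha>) * (Z - 2 * Y + X)"
    using a0 by (simp add: field_simps)
  moreover have "\<alpha> * X + (1 - \<alpha>) * (Z - 2 * Y + X) = X + (1 - \<alpha>) * Z - 2 * (1 - \<alpha>) * Y"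
    by (simp add: algebra_simps)
  ultimately have h2: "X + (1 - \<alpha>) * Z - 2 * (1 - \<alpha>) * Y \<le> \<alpha> * Z" by simp
  have "(norm (v - (1 - \<alpha>) *\<^sub>R u))\<^sup>2 = X - 2 * (1 - \<alpha>) * Y + (1 - \<alpha>)\<^sup>2 * Z"
    unfolding X_def Y_def Z_def power2_norm_eq_inner
    by (simp add: inner_diff_left inner_diff_right inner_commute algebra_simps power2_eq_square)
  also have "\<dots> \<le> \<alpha>\<^sup>2 * Z" using h2 by (simp add: power2_eq_square algebra_simps)
  finally have s: "(norm (v - (1 - \<alpha>) *\<^sub>R u))\<^sup>2 \<le> \<alpha>\<^sup>2 * (norm u)\<^sup>2"
    by (simp add: Z_def power2_norm_eq_inner)
  have "(norm ((1/\<alpha>) *\<^sub>R (v - (1 - \<alpha>) *\<^sub>R u)))\<^sup>2 = (norm (v - (1 - \<alpha>) *\<^sub>R u))\<^sup>2 / \<alpha>\<^sup>2"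
    using a0 by (simp add: power_divide power2_eq_square)
  also have "\<dots> \<le> (norm u)\<^sup>2" using s a0 by (simp add: divide_le_eq mult.commute)
  finally show ?thesis by (rule power2_le_imp_le) simp
qed



definition Phi :: "('i::finite \<Rightarrow> real) \<Rightarrow> ('i \<Rightarrow> 'a::real_inner) \<Rightarrow> 'a^'i" where
  "Phi \<omega> x = (\<chi> i. sqrt (\<omega> i) *\<^sub>R x i)"

definition wavg :: "('i::finite \<Rightarrow> real) \<Rightarrow> ('i \<Rightarrow> 'a::real_vector) \<Rightarrow> 'a" where
  "wavg \<omega> x = (\<Sum>i\<in>UNIV. \<omega> i *\<^sub>R x i)"

lemma phi_inner: "(\<forall>i. 0 \<le> \<omega> i) \<Longrightarrow> inner (Phi \<omega> x) (Phi \<omega> y) = (\<Sum>i\<in>UNIV. \<omega> i * inner (x i) (y i))"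
  unfolding Phi_def inner_vec_def by (simp add: mult.assoc[symmetric])

lemma phi_diff: "Phi \<omega> x - Phi \<omega> y = Phi \<omega> (\<lambda>i. x i - y i)"
  unfolding Phi_def by (simp add: vec_eq_iff algebra_simps)

lemma phi_add: "Phi \<omega> x + Phi \<omega> y = Phi \<omega> (\<lambda>i. x i + y i)"
  unfolding Phi_def by (simp add: vec_eq_iff algebra_simps)

lemma phi_scale: "c *\<^sub>R Phi \<omega> x = Phi \<omega> (\<lambda>i. c *\<^sub>R x i)"
  unfolding Phi_def by (simp add: vec_eq_iff algebra_simps)

lemma phi_norm2: "(\<forall>i. 0 \<le> \<omega> i) \<Longrightarrow> (norm (Phi \<omega> x))\<^sup>2 = (\<Sum>i\<in>UNIV. \<omega> i * (norm (x i))\<^sup>2)"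
  unfolding power2_norm_eq_inner by (rule phi_inner)

lemma pnorm_phi: "(\<forall>i. 0 \<le> \<omega> i) \<Longrightarrow> pnorm \<omega> x = norm (Phi \<omega> x)"
  unfolding pnorm_def pinner_def norm_eq_sqrt_inner by (simp add: phi_inner)

lemma wavg_diff: "wavg \<omega> x - wavg \<omega> y = wavg \<omega> (\<lambda>i. x i - y i)"
  unfolding wavg_def by (simp add: sum_subtractf scaleR_diff_right)

lemma sum_const_inner:
  assumes s1: "(\<Sum>i\<in>UNIV. \<omega> i) = 1"
  shows "(\<Sum>i\<in>UNIV. \<omega> i * inner c (z i)) = inner c (wavg \<omega> z)"
  unfolding wavg_def by (simp add: inner_sum_right)

lemma presolvent_NS:
  fixes \<omega> :: "'i::finite \<Rightarrow> real" and x :: "'i \<Rightarrow> 'a::real_inner"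
  assumes s1: "(\<Sum>i\<in>UNIV. \<omega> i) = 1"
  shows "presolvent (normal_cone_S \<omega>) x = (\<lambda>i. wavg \<omega> x)"
  unfolding presolvent_def
proof (rule the_equality)
  let ?m = "wavg \<omega> x"
  have mS: "(\<lambda>i. ?m) \<in> diagS" by (simp add: diagS_def)
  have "(\<lambda>i. x i - ?m) \<in> diagS_perp \<omega>"
    unfolding diagS_perp_def
  proof (intro CollectI ballI)
    fix c :: "'i \<Rightarrow> 'a" assume "c \<in> diagS"
    then have c: "c = (\<lambda>i. c undefined)" by (auto simp: diagS_def)
    have "pinner \<omega> c (\<lambda>i. x i - ?m) = (\<Sum>i\<in>UNIV. \<omega> i * inner (c undefined) (x i - ?m))"
      unfolding pinner_def by (subst c) simp
    also have "\<dots> = inner (c undefined) (wavg \<omega> (\<lambda>i. x i - ?m))" by (rule sum_const_inner[OF s1])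
    also have "wavg \<omega> (\<lambda>i. x i - ?m) = 0"
      unfolding wavg_def by (simp add: scaleR_diff_right sum_subtractf scaleR_sum_left[symmetric] s1)
    finally show "pinner \<omega> c (\<lambda>i. x i - ?m) = 0" by simp
  qed
  then show "(\<lambda>i. x i - ?m) \<in> normal_cone_S \<omega> (\<lambda>i. ?m)" using mS by (simp add: normal_cone_S_def)
next
  fix p assume p: "(\<lambda>i. x i - p i) \<in> normal_cone_S \<omega> p"
  let ?m = "wavg \<omega> x"
  have pS: "p \<in> diagS" using p by (auto simp: normal_cone_S_def split: if_splits)
  then have pc: "p = (\<lambda>i. p undefined)" by (auto simp: diagS_def)
  have perp: "(\<lambda>i. x i - p i) \<in> diagS_perp \<omega>" using p pS by (simp add: normal_cone_S_def)
  have "(\<lambda>i. ?m - p undefined) \<in> diagS" by (simp add: diagS_def)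
  moreover have "\<forall>c\<in>diagS. pinner \<omega> c (\<lambda>i. x i - p i) = 0" using perp by (simp add: diagS_perp_def)
  ultimately have "pinner \<omega> (\<lambda>i. ?m - p undefined) (\<lambda>i. x i - p i) = 0" by blast
  then have "0 = pinner \<omega> (\<lambda>i. ?m - p undefined) (\<lambda>i. x i - p i)" by simp
  also have "\<dots> = (\<Sum>i\<in>UNIV. \<omega> i * inner (?m - p undefined) (x i - p undefined))"
    unfolding pinner_def by (subst pc) simp
  also have "\<dots> = inner (?m - p undefined) (wavg \<omega> (\<lambda>i. x i - p undefined))" by (rule sum_const_inner[OF s1])
  also have "wavg \<omega> (\<lambda>i. x i - p undefined) = ?m - p undefined"
    unfolding wavg_def by (simp add: scaleR_diff_right sum_subtractf scaleR_sum_left[symmetric] s1)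
  finally have "?m - p undefined = 0" by simp
  then show "p = (\<lambda>i. ?m)" by (subst pc) auto
qed

lemma presolvent_A:
  fixes A :: "'i \<Rightarrow> 'a::{real_inner,complete_space} \<Rightarrow> 'a set"
  assumes mm: "\<forall>i. maximal_monotone (A i)" and g: "\<forall>i. 0 < g i"
  shows "presolvent (scaled_prod_op g A) x = (\<lambda>i. res (g i) (A i) (x i))"
  unfolding presolvent_def
proof (rule the_equality)
  show "(\<lambda>i. x i - res (g i) (A i) (x i)) \<in> scaled_prod_op g A (\<lambda>i. res (g i) (A i) (x i))"
    unfolding scaled_prod_op_def using res_spec(1) mm g by blast
next
  fix p assume "(\<lambda>i. x i - p i) \<in> scaled_prod_op g A p"
  then have "\<forall>i. x i - p i \<in> (\<lambda>v. g i *\<^sub>R v) ` A i (p i)" unfolding scaled_prod_op_def by blast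
  then show "p = (\<lambda>i. res (g i) (A i) (x i))" using res_spec(2) mm g by blast
qed



lemma alpha_facts:
  fixes \<beta> \<gamma> :: real
  assumes b: "0 < \<beta>" and g0: "0 < \<gamma>" and g1: "\<gamma> < 2 * \<beta>"
  defines "\<alpha> \<equiv> max (2/3) (2 / (1 + 2 * \<beta> / \<gamma>))"
  shows "0 < \<alpha>" "\<alpha> < 1" "(1 - \<alpha>) / \<alpha> \<le> ((2*\<beta> - \<gamma>)/\<gamma>) / (1 + (2*\<beta> - \<gamma>)/\<gamma>)"
proof -
  have a2: "2 / (1 + 2 * \<beta> / \<gamma>) = 2 * \<gamma> / (\<gamma> + 2 * \<beta>)" using g0 b by (simp add: field_simps)
  have a2lt: "2 * \<gamma> / (\<gamma> + 2 * \<beta>) < 1" using g0 g1 b by (simp add: field_simps)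
  show ap: "0 < \<alpha>" unfolding \<alpha>_def by simp
  show "\<alpha> < 1" unfolding \<alpha>_def a2 using a2lt by simp
  have rhs: "((2*\<beta> - \<gamma>)/\<gamma>) / (1 + (2*\<beta> - \<gamma>)/\<gamma>) = (4*\<beta> - \<gamma>) / (2*\<beta>) - 1"
    using g0 b by (simp add: field_simps)
  have lhs: "(1 - \<alpha>) / \<alpha> = 1 / \<alpha> - 1" using ap by (simp add: field_simps)
  have "1 / \<alpha> \<le> (4*\<beta> - \<gamma>) / (2*\<beta>)"
  proof (cases "\<gamma> \<le> \<beta>")
    case True
    have "2/3 \<le> \<alpha>" unfolding \<alpha>_def by simp
    then have "1 / \<alpha> \<le> 1 / (2/3)" by (rule divide_left_mono) (use ap in auto)
    also have "\<dots> \<le> (4*\<beta> - \<gamma>) / (2*\<beta>)" using True b by (simp add: field_simps)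
    finally show ?thesis .
  next
    case False
    have pos: "0 < 2 * \<gamma> / (\<gamma> + 2 * \<beta>)" using g0 b by simp
    have "2 * \<gamma> / (\<gamma> + 2 * \<beta>) \<le> \<alpha>" unfolding \<alpha>_def a2 by simp
    then have "1 / \<alpha> \<le> 1 / (2 * \<gamma> / (\<gamma> + 2 * \<beta>))" by (rule divide_left_mono) (use ap pos g0 b in \<open>auto intro!: mult_pos_pos divide_pos_pos\<close>)
    also have "\<dots> = (\<gamma> + 2 * \<beta>) / (2 * \<gamma>)" by simp
    also have "\<dots> \<le> (4*\<beta> - \<gamma>) / (2*\<beta>)"
    proof -
      have "0 \<le> (\<gamma> - \<beta>) * (2 * \<beta> - \<gamma>)" using False g1 by simp
      then have "2 * \<beta> * (\<gamma> + 2 * \<beta>) \<le> 2 * \<gamma> * (4*\<beta> - \<gamma>)" by (simp add: algebra_simps)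
      then show ?thesis using g0 b by (simp add: divide_le_eq le_divide_eq mult.commute mult.left_commute)
    qed
    finally show ?thesis .
  qed
  then show "(1 - \<alpha>) / \<alpha> \<le> ((2*\<beta> - \<gamma>)/\<gamma>) / (1 + (2*\<beta> - \<gamma>)/\<gamma>)" unfolding lhs rhs by simp
qed



lemma RN_iso:
  fixes \<omega> :: "'i::finite \<Rightarrow> real" and a b :: "'i \<Rightarrow> 'a::real_inner"
  assumes s1: "(\<Sum>i\<in>UNIV. \<omega> i) = 1"
  shows "(\<Sum>i\<in>UNIV. \<omega> i * (norm ((2 *\<^sub>R wavg \<omega> a - a i) - (2 *\<^sub>R wavg \<omega> b - b i)))\<^sup>2)
       = (\<Sum>i\<in>UNIV. \<omega> i * (norm (a i - b i))\<^sup>2)"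
proof -
  define d where "d = (\<lambda>i. a i - b i)"
  define D where "D = wavg \<omega> d"
  have DD: "wavg \<omega> a - wavg \<omega> b = D" unfolding D_def d_def by (rule wavg_diff)
  have e: "(2 *\<^sub>R wavg \<omega> a - a i) - (2 *\<^sub>R wavg \<omega> b - b i) = 2 *\<^sub>R D - d i" for i
    using DD by (simp add: d_def algebra_simps scaleR_diff_right[symmetric])
  have "(\<Sum>i\<in>UNIV. \<omega> i * (norm (2 *\<^sub>R D - d i))\<^sup>2)
      = (\<Sum>i\<in>UNIV. 4 * inner D D * \<omega> i - 4 * (\<omega> i * inner D (d i)) + \<omega> i * inner (d i) (d i))"
    unfolding power2_norm_eq_inner
    by (intro sum.cong refl) (simp add: inner_diff_left inner_diff_right inner_commute algebra_simps)
  also have "\<dots> = 4 * inner D D * (\<Sum>i\<in>UNIV. \<omega> i) - 4 * (\<Sum>i\<in>UNIV. \<omega> i * inner D (d i)) + (\<Sum>i\<in>UNIV. \<omega> i * inner (d i) (d i))"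
    by (simp add: sum.distrib sum_subtractf sum_distrib_left)
  also have "(\<Sum>i\<in>UNIV. \<omega> i * inner D (d i)) = inner D D" unfolding D_def by (rule sum_const_inner[OF s1])
  finally show ?thesis using s1 by (simp add: e d_def power2_norm_eq_inner)
qed

lemma refl_NS:
  assumes s1: "(\<Sum>i\<in>UNIV. \<omega> i) = 1"
  shows "preflection (normal_cone_S \<omega>) z = (\<lambda>i. 2 *\<^sub>R wavg \<omega> z - z i)"
  unfolding preflection_def presolvent_NS[OF s1] ..

lemma refl_A:
  fixes A :: "'i \<Rightarrow> 'a::{real_inner,complete_space} \<Rightarrow> 'a set"
  assumes mm: "\<forall>i. maximal_monotone (A i)" and g: "\<forall>i. 0 < g i"
  shows "preflection (scaled_prod_op g A) z = (\<lambda>i. 2 *\<^sub>R res (g i) (A i) (z i) - z i)"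
  unfolding preflection_def presolvent_A[OF mm g] ..

lemma T1_firm:
  fixes \<omega> :: "'i::finite \<Rightarrow> real" and A :: "'i \<Rightarrow> 'a::{real_inner,complete_space} \<Rightarrow> 'a set"
  assumes w0: "\<forall>i. 0 \<le> \<omega> i" and s1: "(\<Sum>i\<in>UNIV. \<omega> i) = 1"
    and mm: "\<forall>i. maximal_monotone (A i)" and g: "\<forall>i. 0 < g i"
  shows "(norm (Phi \<omega> (T1 \<omega> g A a) - Phi \<omega> (T1 \<omega> g A b)))\<^sup>2
     \<le> inner (Phi \<omega> (T1 \<omega> g A a) - Phi \<omega> (T1 \<omega> g A b)) (Phi \<omega> a - Phi \<omega> b)"
proof -
  define RN where "RN = (preflection (normal_cone_S \<omega>) :: ('i \<Rightarrow> 'a) \<Rightarrow> _)"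
  define RA where "RA = preflection (scaled_prod_op g A)"
  have RN: "RN z = (\<lambda>i. 2 *\<^sub>R wavg \<omega> z - z i)" for z unfolding RN_def by (rule refl_NS[OF s1])
  have RA: "RA z = (\<lambda>i. 2 *\<^sub>R res (g i) (A i) (z i) - z i)" for z unfolding RA_def by (rule refl_A[OF mm g])
  define \<rho> where "\<rho> = Phi \<omega> (RA (RN a)) - Phi \<omega> (RA (RN b))"
  define W where "W = Phi \<omega> a - Phi \<omega> b"
  have eq: "Phi \<omega> (T1 \<omega> g A a) - Phi \<omega> (T1 \<omega> g A b) = (1/2) *\<^sub>R (\<rho> + W)"
    unfolding \<rho>_def W_def T1_def RN_def RA_def Phi_def by (simp add: vec_eq_iff algebra_simps)
  have "(norm \<rho>)\<^sup>2 \<le> (norm W)\<^sup>2"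
  proof -
    have "(norm \<rho>)\<^sup>2 = (\<Sum>i\<in>UNIV. \<omega> i * (norm (RA (RN a) i - RA (RN b) i))\<^sup>2)"
      unfolding \<rho>_def phi_diff by (rule phi_norm2[OF w0])
    also have "\<dots> \<le> (\<Sum>i\<in>UNIV. \<omega> i * (norm (RN a i - RN b i))\<^sup>2)"
    proof (rule sum_mono)
      fix i
      have "(norm (RA (RN a) i - RA (RN b) i))\<^sup>2 \<le> (norm (RN a i - RN b i))\<^sup>2"
        unfolding RA using res_refl_ne mm g by blast
      then show "\<omega> i * (norm (RA (RN a) i - RA (RN b) i))\<^sup>2 \<le> \<omega> i * (norm (RN a i - RN b i))\<^sup>2"
        using w0 by (simp add: mult_left_mono)
    qed
    also have "\<dots> = (\<Sum>i\<in>UNIV. \<omega> i * (norm (a i - b i))\<^sup>2)"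
      unfolding RN by (rule RN_iso[OF s1])
    also have "\<dots> = (norm W)\<^sup>2" unfolding W_def phi_diff by (rule phi_norm2[OF w0, symmetric])
    finally show ?thesis .
  qed
  then have "norm \<rho> \<le> norm W" by (rule power2_le_imp_le) simp
  then show ?thesis unfolding eq W_def[symmetric] by (rule firm_half)
qed

lemma coco:
  fixes B :: "'a::real_inner \<Rightarrow> 'a"
  assumes b: "0 < \<beta>" and fn: "firmly_nonexpansive (\<lambda>x. \<beta> *\<^sub>R B x)"
  shows "\<beta> * (norm (B p - B q))\<^sup>2 \<le> inner (p - q) (B p - B q)"
proof -
  obtain R where R: "nonexpansive R" and RB: "\<forall>x. \<beta> *\<^sub>R B x = (1 - 1/2) *\<^sub>R x + (1/2) *\<^sub>R R x"
    using fn unfolding firmly_nonexpansive_def averaged_def by blast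
  have e: "\<beta> *\<^sub>R (B p - B q) = (1/2) *\<^sub>R ((R p - R q) + (p - q))"
    using RB[rule_format, of p] RB[rule_format, of q] by (simp add: algebra_simps)
  have "norm (R p - R q) \<le> norm (p - q)" using R unfolding nonexpansive_def by blast
  then have "(norm (\<beta> *\<^sub>R (B p - B q)))\<^sup>2 \<le> inner (\<beta> *\<^sub>R (B p - B q)) (p - q)"
    unfolding e by (rule firm_half)
  then show ?thesis
    using b by (simp add: power_mult_distrib power2_eq_square inner_commute mult.commute mult.left_commute)
qed

lemma T2_ineq:
  fixes \<omega> :: "'i::finite \<Rightarrow> real" and B :: "'a::real_inner \<Rightarrow> 'a"
  assumes w0: "\<forall>i. 0 \<le> \<omega> i" and s1: "(\<Sum>i\<in>UNIV. \<omega> i) = 1"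
    and b: "0 < \<beta>" and fn: "firmly_nonexpansive (\<lambda>x. \<beta> *\<^sub>R B x)"
    and g0: "0 < \<gamma>"
  shows "(norm (Phi \<omega> (T2 \<omega> \<gamma> B x) - Phi \<omega> (T2 \<omega> \<gamma> B y)))\<^sup>2
     + ((2*\<beta> - \<gamma>)/\<gamma>) * (norm ((Phi \<omega> x - Phi \<omega> y) - (Phi \<omega> (T2 \<omega> \<gamma> B x) - Phi \<omega> (T2 \<omega> \<gamma> B y))))\<^sup>2
     \<le> (norm (Phi \<omega> x - Phi \<omega> y))\<^sup>2"
proof -
  define d where "d = (\<lambda>i. x i - y i)"
  define E where "E = B (wavg \<omega> x) - B (wavg \<omega> y)"
  define D where "D = wavg \<omega> d"
  have DD: "wavg \<omega> x - wavg \<omega> y = D" unfolding D_def d_def by (rule wavg_diff)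
  have T2: "T2 \<omega> \<gamma> B z = (\<lambda>i. z i - \<gamma> *\<^sub>R B (wavg \<omega> z))" for z
    unfolding T2_def diag_op_def presolvent_NS[OF s1] ..
  have e1: "Phi \<omega> (T2 \<omega> \<gamma> B x) - Phi \<omega> (T2 \<omega> \<gamma> B y) = Phi \<omega> (\<lambda>i. d i - \<gamma> *\<^sub>R E)"
    unfolding T2 phi_diff d_def E_def by (simp add: algebra_simps)
  have e2: "(Phi \<omega> x - Phi \<omega> y) - Phi \<omega> (\<lambda>i. d i - \<gamma> *\<^sub>R E) = Phi \<omega> (\<lambda>i. \<gamma> *\<^sub>R E)"
    unfolding phi_diff d_def by simp
  have n1: "(norm (Phi \<omega> (\<lambda>i. d i - \<gamma> *\<^sub>R E)))\<^sup>2 = (\<Sum>i\<in>UNIV. \<omega> i * (norm (d i))\<^sup>2) - 2 * \<gamma> * inner D E + \<gamma>\<^sup>2 * (norm E)\<^sup>2"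
  proof -
    have "(norm (Phi \<omega> (\<lambda>i. d i - \<gamma> *\<^sub>R E)))\<^sup>2 = (\<Sum>i\<in>UNIV. \<omega> i * inner (d i) (d i) - 2 * \<gamma> * (\<omega> i * inner E (d i)) + \<gamma>\<^sup>2 * inner E E * \<omega> i)"
      unfolding phi_norm2[OF w0] unfolding power2_norm_eq_inner
      by (intro sum.cong refl) (simp add: inner_diff_left inner_diff_right inner_commute algebra_simps power2_eq_square)
    also have "\<dots> = (\<Sum>i\<in>UNIV. \<omega> i * inner (d i) (d i)) - 2 * \<gamma> * (\<Sum>i\<in>UNIV. \<omega> i * inner E (d i)) + \<gamma>\<^sup>2 * inner E E * (\<Sum>i\<in>UNIV. \<omega> i)"
      by (simp add: sum.distrib sum_subtractf sum_distrib_left)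
    also have "(\<Sum>i\<in>UNIV. \<omega> i * inner E (d i)) = inner E D" unfolding D_def by (rule sum_const_inner[OF s1])
    finally show ?thesis using s1 by (simp add: power2_norm_eq_inner inner_commute)
  qed
  have n2: "(norm (Phi \<omega> (\<lambda>i. \<gamma> *\<^sub>R E)))\<^sup>2 = \<gamma>\<^sup>2 * (norm E)\<^sup>2"
    unfolding phi_norm2[OF w0] using s1 by (simp add: sum_distrib_right[symmetric] power_mult_distrib)
  have n3: "(norm (Phi \<omega> x - Phi \<omega> y))\<^sup>2 = (\<Sum>i\<in>UNIV. \<omega> i * (norm (d i))\<^sup>2)"
    unfolding phi_diff d_def by (rule phi_norm2[OF w0])
  have c: "\<beta> * (norm E)\<^sup>2 \<le> inner D E" unfolding E_def DD[symmetric] by (rule coco[OF b fn])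
  have k: "((2*\<beta> - \<gamma>)/\<gamma>) * (\<gamma>\<^sup>2 * (norm E)\<^sup>2) = (2*\<beta> - \<gamma>) * \<gamma> * (norm E)\<^sup>2"
    using g0 by (simp add: power2_eq_square field_simps)
  have "- 2 * \<gamma> * inner D E + \<gamma>\<^sup>2 * (norm E)\<^sup>2 + (2*\<beta> - \<gamma>) * \<gamma> * (norm E)\<^sup>2 = - 2 * \<gamma> * (inner D E - \<beta> * (norm E)\<^sup>2)"
    by (simp add: power2_eq_square algebra_simps)
  also have "\<dots> \<le> 0" using c g0 by simp
  finally have "- 2 * \<gamma> * inner D E + \<gamma>\<^sup>2 * (norm E)\<^sup>2 + (2*\<beta> - \<gamma>) * \<gamma> * (norm E)\<^sup>2 \<le> 0" .
  then show ?thesis unfolding e1 e2 n1 n2 n3 k by linarith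
qed



theorem proposition4p5:
  fixes \<omega> :: "'i::finite \<Rightarrow> real"
    and A :: "'i \<Rightarrow> 'a::{real_inner, complete_space} \<Rightarrow> 'a set"
    and B :: "'a \<Rightarrow> 'a"
    and \<beta> \<gamma> :: real
    and g :: "'i \<Rightarrow> real"
  assumes "\<forall>i. 0 < \<omega> i \<and> \<omega> i < 1"
    and "(\<Sum>i\<in>UNIV. \<omega> i) = 1"
    and "\<forall>i. maximal_monotone (A i)"
    and "0 < \<beta>"
    and "firmly_nonexpansive (\<lambda>x. \<beta> *\<^sub>R B x)"
    and "\<forall>i. 0 < g i"
    and "0 < \<gamma>" and "\<gamma> < 2 * \<beta>"
  shows "paveraged \<omega> (max (2/3) (2 / (1 + 2 * \<beta> / \<gamma>))) (T1 \<omega> g A \<circ> T2 \<omega> \<gamma> B)"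
proof -
  note as = assms
  have w0: "\<forall>i. 0 \<le> \<omega> i" using as(1) by (simp add: less_imp_le)
  define \<alpha> where "\<alpha> = max (2/3) (2 / (1 + 2 * \<beta> / \<gamma>))"
  define k2 where "k2 = (2*\<beta> - \<gamma>)/\<gamma>"
  have a0: "0 < \<alpha>" and a1: "\<alpha> < 1" and ak: "(1 - \<alpha>) / \<alpha> \<le> k2 / (1 + k2)"
    using alpha_facts[OF as(4) as(7) as(8)] unfolding \<alpha>_def k2_def by auto
  have k2p: "0 < k2" unfolding k2_def using as(7) as(8) by simp
  have k0: "0 \<le> (1 - \<alpha>) / \<alpha>" using a0 a1 by simp
  define T where "T = T1 \<omega> g A \<circ> T2 \<omega> \<gamma> B"
  define R where "R = (\<lambda>x. \<lambda>i. (1/\<alpha>) *\<^sub>R (T x i - (1 - \<alpha>) *\<^sub>R x i))"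
  have "pnonexpansive \<omega> R"
    unfolding pnonexpansive_def
  proof (intro allI)
    fix x y :: "'i \<Rightarrow> 'a"
    define u where "u = Phi \<omega> x - Phi \<omega> y"
    define v where "v = Phi \<omega> (T x) - Phi \<omega> (T y)"
    define w where "w = Phi \<omega> (T2 \<omega> \<gamma> B x) - Phi \<omega> (T2 \<omega> \<gamma> B y)"
    have f: "(norm v)\<^sup>2 \<le> inner v w"
      unfolding v_def w_def T_def comp_def by (rule T1_firm[OF w0 as(2) as(3) as(6)])
    have t2: "(norm w)\<^sup>2 + k2 * (norm (u - w))\<^sup>2 \<le> (norm u)\<^sup>2"
      unfolding u_def w_def k2_def by (rule T2_ineq[OF w0 as(2) as(4) as(5) as(7)])
    have h: "(norm v)\<^sup>2 + ((1 - \<alpha>) / \<alpha>) * (norm (u - v))\<^sup>2 \<le> (norm u)\<^sup>2"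
      by (rule comp_ineq[OF f t2 k2p k0 ak])
    have eR: "Phi \<omega> (\<lambda>i. R x i - R y i) = (1/\<alpha>) *\<^sub>R (v - (1 - \<alpha>) *\<^sub>R u)"
      unfolding R_def u_def v_def Phi_def by (simp add: vec_eq_iff algebra_simps)
    show "pnorm \<omega> (\<lambda>i. R x i - R y i) \<le> pnorm \<omega> (\<lambda>i. x i - y i)"
    proof -
      have 1: "pnorm \<omega> (\<lambda>i. x i - y i) = norm u" unfolding pnorm_phi[OF w0] u_def phi_diff ..
      have 2: "pnorm \<omega> (\<lambda>i. R x i - R y i) = norm ((1/\<alpha>) *\<^sub>R (v - (1 - \<alpha>) *\<^sub>R u))"
        unfolding pnorm_phi[OF w0] eR ..
      show ?thesis unfolding 1 2 by (rule avg_from_ineq[OF a0 a1 h])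
    qed
  qed
  moreover have "\<forall>x. T x = (\<lambda>i. (1 - \<alpha>) *\<^sub>R x i + \<alpha> *\<^sub>R R x i)"
    using a0 by (simp add: R_def)
  ultimately show ?thesis unfolding paveraged_def \<alpha>_def[symmetric] T_def[symmetric]
    using a0 a1 by blast
qed

end
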